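(* Let $\Omega\subset\mathbb R^d$ be a bounded Borel set, $f:\Omega\to[0,\infty)$ with $\int_\Omega f=1$, $p\ge1$, $x_1,x_2\in\Omega$, $h_1,h_2:[0,1]\to[0,\infty)$ continuous and non-decreasing, and $\kappa\in\mathbb N$, $\kappa\ge1$. Assume $G$ is strictly Lipschitz with constant $\kappa$, i.e. $|G(s)-G(t)|<\kappa|s-t|$ for all $s\ne t$. Let $t_1,\dots,t_\kappa\in\mathbb R$ be arbitrary and define for $n\ge\kappa$ $$t_{n+1}=\frac1\kappa\sum_{m=n-\kappa+1}^nG(t_m),$$ and for $n>\kappa$ let $\psi_n(x)=0$ if $\tau(x)<t_n$, $\psi_n(x)=1$ otherwise. Then $t_n\to\bar t$ and $\psi_n\to\bar\psi$ uniformly on every compact subset of $\Omega\setminus\{\tau=\bar t\}$.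
   Context: $\tau(x)=|x-x_1|^p-|x-x_2|^p$, $m(t)=\int_{\{x\in\Omega:\tau(x)<t\}}f\,dx$, $G(t)=h_2(1-m(t))-h_1(m(t))$. There is a unique $\bar t$ with $G(\bar t)=\bar t$, and $\bar\psi(x)=0$ if $\tau(x)<\bar t$, $\bar\psi(x)=1$ if $\tau(x)>\bar t$ (the unique equilibrium). *)

theory Defs
  imports "HOL-Analysis.Analysis"
begin

definition tau :: "real \<Rightarrow> 'a::euclidean_space \<Rightarrow> 'a \<Rightarrow> 'a \<Rightarrow> real" where
  "tau p x1 x2 x = norm (x - x1) powr p - norm (x - x2) powr p"

definition mfun :: "'a::euclidean_space set \<Rightarrow> ('a \<Rightarrow> real) \<Rightarrow> real \<Rightarrow> 'a \<Rightarrow> 'a \<Rightarrow> real \<Rightarrow> real" where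
  "mfun \<Omega> f p x1 x2 t = (LINT x:{x \<in> \<Omega>. tau p x1 x2 x < t}|lborel. f x)"

definition Gfun :: "'a::euclidean_space set \<Rightarrow> ('a \<Rightarrow> real) \<Rightarrow> real \<Rightarrow> 'a \<Rightarrow> 'a
      \<Rightarrow> (real \<Rightarrow> real) \<Rightarrow> (real \<Rightarrow> real) \<Rightarrow> real \<Rightarrow> real" where
  "Gfun \<Omega> f p x1 x2 h1 h2 t = h2 (1 - mfun \<Omega> f p x1 x2 t) - h1 (mfun \<Omega> f p x1 x2 t)"

definition tbar :: "(real \<Rightarrow> real) \<Rightarrow> real" where
  "tbar G = (THE t. G t = t)"

text \<open>equilibrium: 0 where tau < tbar, 1 where tau > tbar (value on the level set is irrelevant)\<close>
definition psibar :: "(real \<Rightarrow> real) \<Rightarrow> ('a \<Rightarrow> real) \<Rightarrow> 'a \<Rightarrow> real" where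
  "psibar G tauf x = (if tauf x < tbar G then 0 else 1)"

end

theory Submission
  imports Defs
begin

definition win :: "(nat \<Rightarrow> real) \<Rightarrow> nat \<Rightarrow> nat \<Rightarrow> real \<Rightarrow> real \<Rightarrow> bool" where
  "win Q k N a b \<longleftrightarrow> (\<forall>j. N - k \<le> j \<and> j \<le> N \<longrightarrow> a \<le> Q j \<and> Q j \<le> b)"

locale seqsetup =
  fixes Q :: "nat \<Rightarrow> real" and \<Phi> :: "real \<Rightarrow> real" and k :: nat
  assumes \<Phi>cont: "continuous_on UNIV \<Phi>"
  and \<Phi>pos: "\<And>d. d > 0 \<Longrightarrow> 0 \<le> \<Phi> d \<and> \<Phi> d < d"
  and \<Phi>neg: "\<And>d. d < 0 \<Longrightarrow> d < \<Phi> d \<and> \<Phi> d \<le> 0"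
  and \<Phi>0: "\<Phi> 0 = 0"
  and step: "\<And>N. N \<ge> k+1 \<Longrightarrow> Q (N+1) = Q N + \<Phi> (Q (N-k) - Q N)"
begin

lemma between:
  assumes "N \<ge> k+1"
  shows "min (Q N) (Q (N-k)) \<le> Q (N+1) \<and> Q (N+1) \<le> max (Q N) (Q (N-k))"
proof -
  define d where "d = Q (N-k) - Q N"
  have e: "Q (N+1) = Q N + \<Phi> d" using step[OF assms] d_def by simp
  consider "d > 0" | "d < 0" | "d = 0" by linarith
  then show ?thesis
  proof cases
    case 1 then show ?thesis using \<Phi>pos[OF 1] e d_def by auto
  next
    case 2 then show ?thesis using \<Phi>neg[OF 2] e d_def by auto
  next
    case 3 then show ?thesis using \<Phi>0 e d_def by auto
  qed
qed

lemma win_step: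
  assumes "N \<ge> k+1" "win Q k N a b"
  shows "win Q k (N+1) a b"
  unfolding win_def
proof (intro allI impI)
  fix j assume j: "N + 1 - k \<le> j \<and> j \<le> N + 1"
  show "a \<le> Q j \<and> Q j \<le> b"
  proof (cases "j = N+1")
    case True
    have "a \<le> Q N \<and> Q N \<le> b" "a \<le> Q (N-k) \<and> Q (N-k) \<le> b"
      using assms(2) unfolding win_def by auto
    then show ?thesis using between[OF assms(1)] True by auto
  next
    case False
    then show ?thesis using assms(2) j unfolding win_def by auto
  qed
qed

lemma win_plus:
  assumes "N \<ge> k+1" "win Q k N a b"
  shows "win Q k (N+i) a b"
  by (induction i) (use assms win_step in auto)

lemma win_all:
  assumes "N \<ge> k+1" "win Q k N a b" "j \<ge> N - k"
  shows "a \<le> Q j \<and> Q j \<le> b"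
proof (cases "j \<le> N")
  case True then show ?thesis using assms unfolding win_def by auto
next
  case False
  then have "win Q k (N + (j - N)) a b" using win_plus[OF assms(1,2)] by blast
  then show ?thesis using False unfolding win_def by auto
qed

lemma win_le: "win Q k N a b \<Longrightarrow> a \<le> b"
  unfolding win_def by force

lemma lemA:
  assumes "\<epsilon> > 0"
  shows "\<exists>\<eta>>0. \<eta> \<le> \<epsilon>/2 \<and> (\<forall>d. \<bar>d\<bar> \<le> D \<and> \<bar>d - \<Phi> d\<bar> \<le> \<eta> \<longrightarrow> \<bar>d\<bar> < \<epsilon>/2)"
proof -
  define S where "S = cball (0::real) D \<inter> {d. \<epsilon>/2 \<le> \<bar>d\<bar>}"
  have cS: "compact S" unfolding S_def
    by (intro compact_Int_closed compact_cball closed_Collect_le continuous_intros)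
  show ?thesis
  proof (cases "S = {}")
    case True
    show ?thesis
    proof (intro exI[of _ "\<epsilon>/2"] conjI allI impI)
      fix d assume "\<bar>d\<bar> \<le> D \<and> \<bar>d - \<Phi> d\<bar> \<le> \<epsilon>/2"
      then have "d \<notin> S" using True by auto
      then show "\<bar>d\<bar> < \<epsilon>/2" using \<open>\<bar>d\<bar> \<le> D \<and> _\<close> unfolding S_def by auto
    qed (use assms in auto)
  next
    case False
    have "continuous_on S (\<lambda>d. \<bar>d - \<Phi> d\<bar>)"
      using \<Phi>cont by (intro continuous_intros) (auto intro: continuous_on_subset)
    then obtain d0 where d0: "d0 \<in> S" "\<forall>y\<in>S. \<bar>d0 - \<Phi> d0\<bar> \<le> \<bar>y - \<Phi> y\<bar>"
      using continuous_attains_inf[OF cS False] by blast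
    define \<mu> where "\<mu> = \<bar>d0 - \<Phi> d0\<bar>"
    have "d0 \<noteq> 0" using d0(1) assms unfolding S_def by auto
    then have "\<Phi> d0 \<noteq> d0" using \<Phi>pos[of d0] \<Phi>neg[of d0] by linarith
    then have mu: "\<mu> > 0" unfolding \<mu>_def by auto
    show ?thesis
    proof (intro exI[of _ "min (\<epsilon>/2) (\<mu>/2)"] conjI allI impI)
      fix d assume h: "\<bar>d\<bar> \<le> D \<and> \<bar>d - \<Phi> d\<bar> \<le> min (\<epsilon>/2) (\<mu>/2)"
      show "\<bar>d\<bar> < \<epsilon>/2"
      proof (rule ccontr)
        assume "\<not> \<bar>d\<bar> < \<epsilon>/2"
        then have "d \<in> S" using h unfolding S_def by auto
        then have "\<mu> \<le> \<bar>d - \<Phi> d\<bar>" using d0(2) unfolding \<mu>_def by auto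
        then show False using h mu by auto
      qed
    qed (use assms mu in auto)
  qed
qed

lemma B_top:
  assumes stP: "\<And>\<epsilon>. \<epsilon>>0 \<Longrightarrow> st \<epsilon> > 0 \<and> st \<epsilon> \<le> \<epsilon>/2 \<and> (\<forall>d. \<bar>d\<bar> \<le> D \<and> \<bar>d - \<Phi> d\<bar> \<le> st \<epsilon> \<longrightarrow> \<bar>d\<bar> < \<epsilon>/2)"
    and j: "j \<ge> k+1" and b: "Q (j-k) \<le> b" and D: "\<bar>Q (j-k) - Q j\<bar> \<le> D"
    and e: "\<epsilon> > 0" and h: "Q (j+1) \<ge> b - st \<epsilon>"
  shows "Q j \<ge> b - \<epsilon>"
proof -
  define d where "d = Q (j-k) - Q j"
  have eq: "Q (j+1) = Q j + \<Phi> d" using step[OF j] d_def by simp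
  note s = stP[OF e]
  show ?thesis
  proof (cases "d > 0")
    case True
    have "\<bar>d - \<Phi> d\<bar> \<le> st \<epsilon>" using \<Phi>pos[OF True] eq d_def b h by auto
    then have "\<bar>d\<bar> < \<epsilon>/2" using s D d_def by auto
    then show ?thesis using \<Phi>pos[OF True] eq h s by auto
  next
    case False
    then have "\<Phi> d \<le> 0" using \<Phi>neg[of d] \<Phi>0 by (cases "d = 0") auto
    then show ?thesis using eq h s by auto
  qed
qed

lemma B_bot:
  assumes stP: "\<And>\<epsilon>. \<epsilon>>0 \<Longrightarrow> st \<epsilon> > 0 \<and> st \<epsilon> \<le> \<epsilon>/2 \<and> (\<forall>d. \<bar>d\<bar> \<le> D \<and> \<bar>d - \<Phi> d\<bar> \<le> st \<epsilon> \<longrightarrow> \<bar>d\<bar> < \<epsilon>/2)"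
    and j: "j \<ge> k+1" and a: "a \<le> Q (j-k)" and D: "\<bar>Q (j-k) - Q j\<bar> \<le> D"
    and e: "\<epsilon> > 0" and h: "Q (j+1) \<le> a + st \<epsilon>"
  shows "Q j \<le> a + \<epsilon>"
proof -
  define d where "d = Q (j-k) - Q j"
  have eq: "Q (j+1) = Q j + \<Phi> d" using step[OF j] d_def by simp
  note s = stP[OF e]
  show ?thesis
  proof (cases "d < 0")
    case True
    have "\<bar>d - \<Phi> d\<bar> \<le> st \<epsilon>" using \<Phi>neg[OF True] eq d_def a h by auto
    then have "\<bar>d\<bar> < \<epsilon>/2" using s D d_def by auto
    then show ?thesis using \<Phi>neg[OF True] eq h s by auto
  next
    case False
    then have "\<Phi> d \<ge> 0" using \<Phi>pos[of d] \<Phi>0 by (cases "d = 0") auto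
    then show ?thesis using eq h s by auto
  qed
qed

lemma chain:
  assumes stP: "\<And>\<epsilon>. \<epsilon>>0 \<Longrightarrow> st \<epsilon> > 0 \<and> st \<epsilon> \<le> \<epsilon>/2 \<and> (\<forall>d. \<bar>d\<bar> \<le> D \<and> \<bar>d - \<Phi> d\<bar> \<le> st \<epsilon> \<longrightarrow> \<bar>d\<bar> < \<epsilon>/2)"
    and Dall: "\<And>j. j \<ge> k+1 \<Longrightarrow> \<bar>Q (j-k) - Q j\<bar> \<le> D"
    and N: "N \<ge> k+1" and ab: "\<And>j. j \<ge> N - k \<Longrightarrow> a \<le> Q j \<and> Q j \<le> b"
    and e0: "\<epsilon>0 > 0"
  shows "(Q (N+i) \<ge> b - (st ^^ i) \<epsilon>0 \<longrightarrow> Q N \<ge> b - \<epsilon>0) \<and>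
         (Q (N+i) \<le> a + (st ^^ i) \<epsilon>0 \<longrightarrow> Q N \<le> a + \<epsilon>0)"
proof (induction i)
  case 0 then show ?case by simp
next
  case (Suc i)
  have pos: "(st ^^ i) \<epsilon>0 > 0" by (induction i) (use stP e0 in auto)
  have j: "N + i \<ge> k+1" using N by simp
  have ab': "a \<le> Q (N+i-k) \<and> Q (N+i-k) \<le> b" using ab by simp
  show ?case
  proof (intro conjI impI)
    assume "b - (st ^^ Suc i) \<epsilon>0 \<le> Q (N + Suc i)"
    then have "Q (N+i) \<ge> b - (st ^^ i) \<epsilon>0"
      using B_top[OF stP j _ Dall[OF j] pos] ab' by simp
    then show "b - \<epsilon>0 \<le> Q N" using Suc.IH by blast
  next
    assume "Q (N + Suc i) \<le> a + (st ^^ Suc i) \<epsilon>0"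
    then have "Q (N+i) \<le> a + (st ^^ i) \<epsilon>0"
      using B_bot[OF stP j _ Dall[OF j] pos] ab' by simp
    then show "Q N \<le> a + \<epsilon>0" using Suc.IH by blast
  qed
qed


lemma lemC:
  assumes stP: "\<And>\<epsilon>. \<epsilon>>0 \<Longrightarrow> st \<epsilon> > 0 \<and> st \<epsilon> \<le> \<epsilon>/2 \<and> (\<forall>d. \<bar>d\<bar> \<le> D \<and> \<bar>d - \<Phi> d\<bar> \<le> st \<epsilon> \<longrightarrow> \<bar>d\<bar> < \<epsilon>/2)"
    and Dall: "\<And>j. j \<ge> k+1 \<Longrightarrow> \<bar>Q (j-k) - Q j\<bar> \<le> D"
    and N: "N \<ge> k+1" and w: "win Q k N a b" and l: "lv > 0" "lv \<le> b - a"
  shows "win Q k (N+k+1) a (b - (st ^^ (k+1)) (lv/3)) \<or> win Q k (N+k+1) (a + (st ^^ (k+1)) (lv/3)) b"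
proof (rule ccontr)
  define \<eta> where "\<eta> = (st ^^ (k+1)) (lv/3)"
  assume "\<not> ?thesis"
  then have n1: "\<not> win Q k (N+k+1) a (b - \<eta>)" and n2: "\<not> win Q k (N+k+1) (a + \<eta>) b"
    unfolding \<eta>_def by auto
  have ab: "\<And>j. j \<ge> N - k \<Longrightarrow> a \<le> Q j \<and> Q j \<le> b" using win_all[OF N w] by blast
  have pos: "\<And>i. (st ^^ i) (lv/3) > 0" subgoal for i by (induction i) (use stP l in auto) done
  have dec: "\<And>n. (st ^^ Suc n) (lv/3) \<le> (st ^^ n) (lv/3)"
  proof -
    fix n
    have "st ((st ^^ n) (lv/3)) \<le> (st ^^ n) (lv/3) / 2" using stP[OF pos[of n]] by blast
    then show "(st ^^ Suc n) (lv/3) \<le> (st ^^ n) (lv/3)" using pos[of n] by simp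
  qed
  have anti: "\<And>i. i \<le> k+1 \<Longrightarrow> \<eta> \<le> (st ^^ i) (lv/3)"
    unfolding \<eta>_def by (rule lift_Suc_antimono_le[of "\<lambda>i. (st ^^ i) (lv/3)"]) (rule dec)
  obtain j1 where j1: "N + k + 1 - k \<le> j1" "j1 \<le> N+k+1" "\<not> (a \<le> Q j1 \<and> Q j1 \<le> b - \<eta>)"
    using n1 unfolding win_def by blast
  then have j1': "N + 1 \<le> j1" "Q j1 > b - \<eta>" using ab[of j1] by auto
  obtain j2 where j2: "N + k + 1 - k \<le> j2" "j2 \<le> N+k+1" "\<not> (a + \<eta> \<le> Q j2 \<and> Q j2 \<le> b)"
    using n2 unfolding win_def by blast
  then have j2': "N + 1 \<le> j2" "Q j2 < a + \<eta>" using ab[of j2] by auto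
  have c1: "Q N \<ge> b - lv/3"
  proof -
    have "j1 - N \<le> k+1" "N + (j1 - N) = j1" using j1 j1' by auto
    then have "Q (N + (j1 - N)) \<ge> b - (st ^^ (j1-N)) (lv/3)" using j1' anti[of "j1-N"] by auto
    then show ?thesis using chain[OF stP Dall N ab, of "lv/3" "j1-N"] l by auto
  qed
  have c2: "Q N \<le> a + lv/3"
  proof -
    have "j2 - N \<le> k+1" "N + (j2 - N) = j2" using j2 j2' by auto
    then have "Q (N + (j2 - N)) \<le> a + (st ^^ (j2-N)) (lv/3)" using j2' anti[of "j2-N"] by auto
    then show ?thesis using chain[OF stP Dall N ab, of "lv/3" "j2-N"] l by auto
  qed
  show False using c1 c2 l by auto
qed


lemma conv:
  assumes lv: "lv > 0"
  shows "\<exists>N1. \<forall>N\<ge>N1. \<bar>Q (N-k) - Q N\<bar> < lv"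
proof -
  define a0 where "a0 = Min (Q ` {1..k+1})"
  define b0 where "b0 = Max (Q ` {1..k+1})"
  have w0: "win Q k (k+1) a0 b0" unfolding win_def a0_def b0_def
    by (auto intro!: Min_le Max_ge)
  define D where "D = b0 - a0"
  have Dall: "\<And>j. j \<ge> k+1 \<Longrightarrow> \<bar>Q (j-k) - Q j\<bar> \<le> D"
  proof -
    fix j :: nat assume j: "j \<ge> k+1"
    have "a0 \<le> Q (j-k) \<and> Q (j-k) \<le> b0" "a0 \<le> Q j \<and> Q j \<le> b0"
      using win_all[OF _ w0, of "j-k"] win_all[OF _ w0, of j] j by auto
    then show "\<bar>Q (j-k) - Q j\<bar> \<le> D" unfolding D_def by auto
  qed
  have "\<forall>\<epsilon>. \<exists>\<eta>. \<epsilon> > 0 \<longrightarrow> (\<eta>>0 \<and> \<eta> \<le> \<epsilon>/2 \<and> (\<forall>d. \<bar>d\<bar> \<le> D \<and> \<bar>d - \<Phi> d\<bar> \<le> \<eta> \<longrightarrow> \<bar>d\<bar> < \<epsilon>/2))"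
    using lemA by blast
  then obtain st where st: "\<forall>\<epsilon>. \<epsilon> > 0 \<longrightarrow> (st \<epsilon>>0 \<and> st \<epsilon> \<le> \<epsilon>/2 \<and> (\<forall>d. \<bar>d\<bar> \<le> D \<and> \<bar>d - \<Phi> d\<bar> \<le> st \<epsilon> \<longrightarrow> \<bar>d\<bar> < \<epsilon>/2))"
    by metis
  then have stP: "\<And>\<epsilon>. \<epsilon>>0 \<Longrightarrow> st \<epsilon> > 0 \<and> st \<epsilon> \<le> \<epsilon>/2 \<and> (\<forall>d. \<bar>d\<bar> \<le> D \<and> \<bar>d - \<Phi> d\<bar> \<le> st \<epsilon> \<longrightarrow> \<bar>d\<bar> < \<epsilon>/2)"
    by blast
  define \<eta> where "\<eta> = (st ^^ (k+1)) (lv/3)"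
  have pos: "\<And>i. (st ^^ i) (lv/3) > 0" subgoal for i by (induction i) (use stP lv in auto) done
  have eta: "\<eta> > 0" unfolding \<eta>_def by (rule pos)
  have it: "\<exists>a b. win Q k (k+1 + m*(k+1)) a b \<and> (b - a < lv \<or> b - a \<le> D - m*\<eta>)" for m
  proof (induction m)
    case 0 show ?case using w0 unfolding D_def by auto
  next
    case (Suc m)
    then obtain a b where ab: "win Q k (k+1 + m*(k+1)) a b" "b - a < lv \<or> b - a \<le> D - m*\<eta>" by blast
    have NN: "k+1 + Suc m*(k+1) = (k+1 + m*(k+1)) + k + 1" by simp
    have N: "k+1 + m*(k+1) \<ge> k+1" by simp
    show ?case
    proof (cases "b - a < lv")
      case True
      have "win Q k ((k+1 + m*(k+1)) + (k+1)) a b" by (rule win_plus[OF N ab(1)])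
      then show ?thesis using True NN by (metis add.assoc)
    next
      case False
      then have le: "b - a \<le> D - m*\<eta>" "lv \<le> b - a" using ab(2) by auto
      from lemC[OF stP Dall N ab(1) lv le(2)]
      have "win Q k (k+1 + Suc m*(k+1)) a (b - \<eta>) \<or> win Q k (k+1 + Suc m*(k+1)) (a + \<eta>) b"
        unfolding \<eta>_def NN by simp
      moreover have "(b - \<eta>) - a \<le> D - Suc m * \<eta>" "b - (a + \<eta>) \<le> D - Suc m * \<eta>"
        using le by (auto simp: algebra_simps)
      ultimately show ?thesis by blast
    qed
  qed
  obtain m :: nat where m: "D < m * \<eta>" using reals_Archimedean3[OF eta] by blast
  obtain a b where ab: "win Q k (k+1 + m*(k+1)) a b" "b - a < lv \<or> b - a \<le> D - m*\<eta>"
    using it by blast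
  have "a \<le> b" using win_le[OF ab(1)] .
  then have bl: "b - a < lv" using ab(2) m by auto
  show ?thesis
  proof (intro exI allI impI)
    fix N assume "N \<ge> k+1 + m*(k+1)"
    moreover have "win Q k ((k+1 + m*(k+1)) + (N - (k+1 + m*(k+1)))) a b"
      by (rule win_plus[OF _ ab(1)]) simp
    ultimately have "win Q k N a b" using \<open>N \<ge> _\<close> by simp
    then have "a \<le> Q (N-k) \<and> Q (N-k) \<le> b" "a \<le> Q N \<and> Q N \<le> b" unfolding win_def by auto
    then show "\<bar>Q (N-k) - Q N\<bar> < lv" using bl by auto
  qed
qed


end

lemma tau_cont: "p > 0 \<Longrightarrow> continuous_on UNIV (tau p x1 x2)"
  unfolding tau_def by (intro continuous_intros continuous_on_powr') auto

lemma m_props: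
  fixes \<Omega> :: "'a::euclidean_space set" and f :: "'a \<Rightarrow> real"
  assumes \<Omega>_borel: "\<Omega> \<in> sets borel" and f_nonneg: "\<forall>x\<in>\<Omega>. f x \<ge> 0"
    and f_int: "set_integrable lborel \<Omega> f" and f_one: "(LINT x:\<Omega>|lborel. f x) = 1"
    and p: "p > 0"
  shows "0 \<le> mfun \<Omega> f p x1 x2 s" "mfun \<Omega> f p x1 x2 s \<le> 1"
    "s \<le> r \<Longrightarrow> mfun \<Omega> f p x1 x2 s \<le> mfun \<Omega> f p x1 x2 r"
proof -
  define A where "A t = {x \<in> \<Omega>. tau p x1 x2 x < t}" for t
  have meas: "tau p x1 x2 \<in> borel_measurable borel"
    by (rule borel_measurable_continuous_onI[OF tau_cont[OF p]])
  have As: "A t \<in> sets lborel" for t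
  proof -
    have "A t = \<Omega> \<inter> (tau p x1 x2 -` {..<t} \<inter> space borel)" unfolding A_def by auto
    also have "\<dots> \<in> sets borel" using \<Omega>_borel meas by (intro sets.Int measurable_sets) auto
    finally show ?thesis by simp
  qed
  have Ai: "set_integrable lborel (A t) f" for t
    by (rule set_integrable_subset[OF f_int As]) (auto simp: A_def)
  have mA: "mfun \<Omega> f p x1 x2 t = (LINT x:A t|lborel. f x)" for t
    unfolding mfun_def A_def by simp
  have mono: "(LINT x:B|lborel. f x) \<le> (LINT x:C|lborel. f x)"
    if "set_integrable lborel B f" "set_integrable lborel C f" "B \<subseteq> C" "C \<subseteq> \<Omega>" for B C
    using that unfolding set_lebesgue_integral_def set_integrable_def
    by (intro integral_mono) (auto simp: indicator_def f_nonneg subsetD)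
  show "0 \<le> mfun \<Omega> f p x1 x2 s" unfolding mA set_lebesgue_integral_def
    by (intro integral_nonneg_AE AE_I2) (auto simp: indicator_def A_def f_nonneg)
  show "mfun \<Omega> f p x1 x2 s \<le> 1" unfolding mA f_one[symmetric]
    by (rule mono[OF Ai f_int]) (auto simp: A_def)
  show "mfun \<Omega> f p x1 x2 s \<le> mfun \<Omega> f p x1 x2 r" if "s \<le> r"
    unfolding mA using that by (intro mono[OF Ai Ai]) (auto simp: A_def)
qed


theorem theorem5p14:
  fixes \<Omega> :: "'a::euclidean_space set" and f :: "'a \<Rightarrow> real" and p :: real
    and x1 x2 :: 'a and h1 h2 :: "real \<Rightarrow> real" and \<kappa> :: nat and t :: "nat \<Rightarrow> real"
  defines "G \<equiv> Gfun \<Omega> f p x1 x2 h1 h2"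
  assumes \<Omega>_borel: "\<Omega> \<in> sets borel" and \<Omega>_bdd: "bounded \<Omega>"
    and f_nonneg: "\<forall>x\<in>\<Omega>. f x \<ge> 0"
    and f_int: "set_integrable lborel \<Omega> f"
    and f_one: "(LINT x:\<Omega>|lborel. f x) = 1"
    and p: "p \<ge> 1"
    and x1: "x1 \<in> \<Omega>" and x2: "x2 \<in> \<Omega>"
    and h1_cont: "continuous_on {0..1} h1" and h2_cont: "continuous_on {0..1} h2"
    and h1_mono: "mono_on {0..1} h1" and h2_mono: "mono_on {0..1} h2"
    and h1_nonneg: "\<forall>s\<in>{0..1}. h1 s \<ge> 0" and h2_nonneg: "\<forall>s\<in>{0..1}. h2 s \<ge> 0"
    and \<kappa>: "\<kappa> \<ge> 1"
    and G_lip: "\<forall>s r. s \<noteq> r \<longrightarrow> \<bar>G s - G r\<bar> < real \<kappa> * \<bar>s - r\<bar>"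
    and t_rec: "\<forall>n\<ge>\<kappa>. t (n + 1) = (1 / real \<kappa>) * (\<Sum>m = n - \<kappa> + 1..n. G (t m))"
  shows "t \<longlonglongrightarrow> tbar G \<and>
    (\<forall>K. compact K \<and> K \<subseteq> \<Omega> - {x. tau p x1 x2 x = tbar G} \<longrightarrow>
      uniform_limit K (\<lambda>n x. if tau p x1 x2 x < t n then 0 else 1)
        (psibar G (tau p x1 x2)) sequentially)"
proof -
  have p0: "p > 0" using p by simp
  note mp = m_props[OF \<Omega>_borel f_nonneg f_int f_one p0]
  have Gmono: "G r \<le> G s" if sr: "s \<le> r" for s r
  proof -
    let ?ms = "mfun \<Omega> f p x1 x2 s" and ?mr = "mfun \<Omega> f p x1 x2 r"
    have le: "?ms \<le> ?mr" using mp(3)[OF sr] .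
    have r01: "?ms \<in> {0..1}" "?mr \<in> {0..1}" "1 - ?ms \<in> {0..1}" "1 - ?mr \<in> {0..1}"
      using mp(1,2) by auto
    have "h1 ?ms \<le> h1 ?mr" using mono_onD[OF h1_mono r01(1,2) le] .
    moreover have "h2 (1 - ?mr) \<le> h2 (1 - ?ms)" using mono_onD[OF h2_mono r01(4,3)] le by simp
    ultimately show "G r \<le> G s" unfolding G_def Gfun_def by linarith
  qed
  have Glip: "\<bar>G s - G r\<bar> \<le> real \<kappa> * \<bar>s - r\<bar>" for s r
    using G_lip by (cases "s = r") (auto intro: less_imp_le)
  have Gcont: "continuous_on UNIV G"
    by (rule lipschitz_on_continuous_on[of "real \<kappa>"], rule lipschitz_onI)
       (use Glip in \<open>auto simp: dist_real_def\<close>)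
  define H where "H s = G s - s" for s
  have Hcont: "continuous_on A H" for A
    unfolding H_def by (intro continuous_intros continuous_on_subset[OF Gcont]) auto
  have "\<exists>x. G x = x"
  proof (cases "G 0 \<ge> 0")
    case True
    have "H (G 0) \<le> 0" "0 \<le> H 0" using Gmono[OF True] True unfolding H_def by auto
    then obtain x where "H x = 0" using IVT2'[of H "G 0" 0 0, OF _ _ True Hcont] by auto
    then show ?thesis unfolding H_def by auto
  next
    case False
    have "H 0 \<le> 0" "0 \<le> H (G 0)" using Gmono[of "G 0" 0] False unfolding H_def by auto
    then obtain x where "H x = 0" using IVT2'[of H 0 0 "G 0", OF _ _ _ Hcont] False by auto
    then show ?thesis unfolding H_def by auto
  qed
  then obtain tb where tbfix: "G tb = tb" by blast
  have uniq: "x = tb" if "G x = x" for x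
  proof (rule ccontr)
    assume "x \<noteq> tb"
    then consider "x < tb" | "tb < x" by linarith
    then show False using Gmono[of x tb] Gmono[of tb x] that tbfix by cases auto
  qed
  have tbar_eq: "tbar G = tb" unfolding tbar_def using tbfix uniq by (rule the_equality)
  define y where "y m = (tb - G (t m)) / real \<kappa>" for m
  define Q where "Q n = (\<Sum>m<n. y m)" for n
  define \<Phi> where "\<Phi> d = (tb - G (tb + d)) / real \<kappa>" for d
  have kpos: "real \<kappa> > 0" using \<kappa> by simp
  have key: "t N - tb = Q (N-\<kappa>) - Q N" if N: "N \<ge> \<kappa>+1" for N
  proof -
    obtain n where n: "N = n+1" "n \<ge> \<kappa>" using N by (intro that[of "N-1"]) auto
    have tr: "t (n+1) = (1/real \<kappa>) * (\<Sum>m = n-\<kappa>+1..n. G (t m))" using t_rec n(2) by blast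
    have set: "{n-\<kappa>+1..n} = {n+1-\<kappa>..<n+1}" using n(2) by auto
    have "Q (n+1) - Q (n+1-\<kappa>) = (\<Sum>m\<in>{n+1-\<kappa>..<n+1}. y m)"
      unfolding Q_def using sum_diff_nat_ivl[of 0 "n+1-\<kappa>" "n+1" y] by (simp add: atLeast0LessThan)
    also have "\<dots> = (\<Sum>m\<in>{n+1-\<kappa>..<n+1}. tb - G (t m)) / real \<kappa>"
      unfolding y_def by (rule sum_divide_distrib[symmetric])
    also have "\<dots> = (real \<kappa> * tb - (\<Sum>m\<in>{n+1-\<kappa>..<n+1}. G (t m))) / real \<kappa>"
      using n(2) by (simp add: sum_subtractf)
    also have "\<dots> = tb - t (n+1)" using tr set kpos by (simp add: field_simps)
    finally show ?thesis using n by simp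
  qed
  interpret S: seqsetup Q \<Phi> \<kappa>
  proof
    show "continuous_on UNIV \<Phi>" unfolding \<Phi>_def
      using \<kappa> by (intro continuous_intros continuous_on_compose2[OF Gcont]) auto
  next
    fix d :: real assume d: "d > 0"
    have "G (tb + d) \<le> tb" using Gmono[of tb "tb+d"] d tbfix by simp
    moreover have "\<bar>G (tb+d) - G tb\<bar> < real \<kappa> * \<bar>(tb + d) - tb\<bar>" using G_lip[rule_format, of "tb+d" tb] d by simp
    ultimately show "0 \<le> \<Phi> d \<and> \<Phi> d < d" unfolding \<Phi>_def using kpos tbfix d
      by (auto simp: field_simps)
  next
    fix d :: real assume d: "d < 0"
    have "G (tb + d) \<ge> tb" using Gmono[of "tb+d" tb] d tbfix by simp
    moreover have "\<bar>G (tb+d) - G tb\<bar> < real \<kappa> * \<bar>(tb + d) - tb\<bar>" using G_lip[rule_format, of "tb+d" tb] d by simp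
    ultimately show "d < \<Phi> d \<and> \<Phi> d \<le> 0" unfolding \<Phi>_def using kpos tbfix d
      by (auto simp: field_simps)
  next
    show "\<Phi> 0 = 0" unfolding \<Phi>_def using tbfix by simp
  next
    fix N assume N: "\<kappa> + 1 \<le> N"
    have "t N = tb + (Q (N-\<kappa>) - Q N)" using key[OF N] by simp
    then show "Q (N+1) = Q N + \<Phi> (Q (N-\<kappa>) - Q N)"
      unfolding Q_def \<Phi>_def y_def by simp
  qed
  have conv: "t \<longlonglongrightarrow> tb"
  proof (rule LIMSEQ_I)
    fix r :: real assume r: "r > 0"
    obtain N1 where N1: "\<forall>N\<ge>N1. \<bar>Q (N-\<kappa>) - Q N\<bar> < r" using S.conv[OF r] by blast
    show "\<exists>no. \<forall>n\<ge>no. norm (t n - tb) < r"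
    proof (intro exI allI impI)
      fix n assume "n \<ge> max N1 (\<kappa>+1)"
      then show "norm (t n - tb) < r" using N1 key[of n] by auto
    qed
  qed
  have unif: "uniform_limit K (\<lambda>n x. if tau p x1 x2 x < t n then 0 else 1)
        (psibar G (tau p x1 x2)) sequentially"
    if K: "compact K" "K \<subseteq> \<Omega> - {x. tau p x1 x2 x = tbar G}" for K
  proof (cases "K = {}")
    case True then show ?thesis by (simp add: uniform_limit_iff)
  next
    case False
    have "continuous_on K (\<lambda>x. \<bar>tau p x1 x2 x - tb\<bar>)"
      by (intro continuous_intros continuous_on_subset[OF tau_cont[OF p0]]) auto
    then obtain x0 where x0: "x0 \<in> K" "\<forall>x\<in>K. \<bar>tau p x1 x2 x0 - tb\<bar> \<le> \<bar>tau p x1 x2 x - tb\<bar>"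
      using continuous_attains_inf[OF K(1) False] by blast
    define \<delta> where "\<delta> = \<bar>tau p x1 x2 x0 - tb\<bar>"
    have \<delta>: "\<delta> > 0" using x0(1) K(2) tbar_eq unfolding \<delta>_def by auto
    obtain N where N: "\<forall>n\<ge>N. norm (t n - tb) < \<delta>" using LIMSEQ_D[OF conv \<delta>] by blast
    show ?thesis unfolding uniform_limit_iff
    proof (intro allI impI eventually_sequentiallyI[of N] ballI)
      fix e :: real and n x assume e: "e > 0" and n: "N \<le> n" and x: "x \<in> K"
      have "\<bar>t n - tb\<bar> < \<delta>" using N n by auto
      moreover have "\<delta> \<le> \<bar>tau p x1 x2 x - tb\<bar>" using x0(2) x unfolding \<delta>_def by auto
      ultimately have "(tau p x1 x2 x < t n) = (tau p x1 x2 x < tb)" by auto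
      then show "dist (if tau p x1 x2 x < t n then 0 else 1) (psibar G (tau p x1 x2) x) < e"
        unfolding psibar_def tbar_eq using e by simp
    qed
  qed
  show ?thesis using conv unif tbar_eq by auto
qed

end
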